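(* Let $X=[1,+\infty)$ with the metric $d(x,y)=|x-y|$, and define $S:X\to X$ by $Sx=4\sqrt{x}$ and $T:X\to X$ by $Tx=\ln(e\cdot x)$. Then: (i) there is no $k\in[0,1)$ and no nonnegative Lebesgue-integrable $\phi:[0,+\infty)\to[0,+\infty)$, summable on compact subsets and with $\int_0^\epsilon\phi(t)\,dt>0$ for all $\epsilon>0$, such that for all $x,y\in X$ \[\int_0^{d(Sx,Sy)}\phi(t)\,dt\le k\int_0^{m(x,y)}\phi(t)\,dt,\quad m(x,y)=\max\Big\{d(x,y),d(x,Sx),d(y,Sy),\tfrac{d(x,Sy)+d(y,Sx)}{2}\Big\};\] (ii) $T$ is one-to-one, continuous and sequentially convergent, and for all $x,y\in X$, $|TSx-TSy|=\tfrac12|Tx-Ty|$; in particular, with $\phi\equiv 1$ and $k=\tfrac12$, for all $x,y\in X$, \[\int_0^{d(TSx,TSy)}\phi(t)\,dt\le k\int_0^{m'(Tx,Ty)}\phi(t)\,dt,\quad m'(Tx,Ty)=\max\Big\{d(Tx,Ty),d(Tx,TSx),d(Ty,TSy),\tfrac{d(Tx,TSy)+d(Ty,TSx)}{2}\Big\}.\]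
   Context: A mapping $T:X\to X$ on a metric space $(X,d)$ is called sequentially convergent if for every sequence $\{y_n\}$ in $X$, convergence of $\{Ty_n\}$ implies convergence of $\{y_n\}$. *)

theory Defs
  imports "HOL-Analysis.Analysis"
begin

definition X :: "real set" where "X = {1..}"

definition S :: "real \<Rightarrow> real" where "S x = 4 * sqrt x"

definition T :: "real \<Rightarrow> real" where "T x = ln (exp 1 * x)"

definition mfun :: "(real \<Rightarrow> real) \<Rightarrow> real \<Rightarrow> real \<Rightarrow> real" where
  "mfun F x y = Max {dist x y, dist x (F x), dist y (F y), (dist x (F y) + dist y (F x)) / 2}"

definition seq_convergent_on :: "'a::metric_space set \<Rightarrow> ('a \<Rightarrow> 'a) \<Rightarrow> bool" where
  "seq_convergent_on A F \<longleftrightarrow>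
     (\<forall>y. (\<forall>n. y n \<in> A) \<longrightarrow> (\<exists>L\<in>A. (\<lambda>n. F (y n)) \<longlonglongrightarrow> L) \<longrightarrow> (\<exists>L\<in>A. y \<longlonglongrightarrow> L))"

definition Int0 :: "(real \<Rightarrow> real) \<Rightarrow> real \<Rightarrow> real" where
  "Int0 \<phi> a = (\<integral>t\<in>{0..a}. \<phi> t \<partial>lborel)"

end

theory Submission
  imports Defs
begin

lemma Int0_one: assumes "a \<ge> 0" shows "Int0 (\<lambda>t. 1) a = a"
  using assms by (simp add: Int0_def set_lebesgue_integral_def)

lemma Max4_ge: "(a::real) \<le> Max {a, b, c, d}"
  by simp

lemma T_SS: assumes "x \<in> X" shows "T (S x) = 1 + ln 4 + ln x / 2" "T x = 1 + ln x"
proof -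
  have x: "x \<ge> 1" using assms by (simp add: X_def)
  have "T (S x) = ln (exp 1) + ln 4 + ln (sqrt x)"
    unfolding T_def S_def using x by (simp add: ln_mult)
  also have "ln (sqrt x) = ln x / 2" using x by (simp add: ln_sqrt)
  finally show "T (S x) = 1 + ln 4 + ln x / 2" by simp
  show "T x = 1 + ln x" unfolding T_def using x by (simp add: ln_mult)
qed

lemma part1: "\<not> (\<exists>k \<phi>. 0 \<le> k \<and> k < 1
          \<and> (\<forall>t\<ge>0. \<phi> t \<ge> 0)
          \<and> (\<forall>a\<ge>0. set_integrable lborel {0..a} \<phi>)
          \<and> (\<forall>\<epsilon>>0. Int0 \<phi> \<epsilon> > 0)
          \<and> (\<forall>x\<in>X. \<forall>y\<in>X. Int0 \<phi> (dist (S x) (S y)) \<le> k * Int0 \<phi> (mfun S x y)))"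
proof
  assume "\<exists>k \<phi>. 0 \<le> k \<and> k < 1
          \<and> (\<forall>t\<ge>0. \<phi> t \<ge> 0)
          \<and> (\<forall>a\<ge>0. set_integrable lborel {0..a} \<phi>)
          \<and> (\<forall>\<epsilon>>0. Int0 \<phi> \<epsilon> > 0)
          \<and> (\<forall>x\<in>X. \<forall>y\<in>X. Int0 \<phi> (dist (S x) (S y)) \<le> k * Int0 \<phi> (mfun S x y))"
  then obtain k \<phi> where k: "k < 1" and pos: "Int0 \<phi> 4 > 0"
    and H: "Int0 \<phi> (dist (S 1) (S 4)) \<le> k * Int0 \<phi> (mfun S 1 4)"
  proof -
    from \<open>\<exists>k \<phi>. _\<close> obtain k \<phi> where a: "k < 1" "\<forall>\<epsilon>>0. Int0 \<phi> \<epsilon> > 0"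
      "\<forall>x\<in>X. \<forall>y\<in>X. Int0 \<phi> (dist (S x) (S y)) \<le> k * Int0 \<phi> (mfun S x y)" by blast
    have "(1::real) \<in> X" "(4::real) \<in> X" by (auto simp: X_def)
    show ?thesis
    proof (rule that[of k \<phi>])
      show "k < 1" "0 < Int0 \<phi> 4" using a by auto
      show "Int0 \<phi> (dist (S 1) (S 4)) \<le> k * Int0 \<phi> (mfun S 1 4)"
        using a(3) \<open>(1::real) \<in> X\<close> \<open>(4::real) \<in> X\<close> by blast
    qed
  qed
  have s4: "sqrt 4 = (2::real)" by (simp add: real_sqrt_eq_iff)
  have "dist (S 1) (S 4) = 4" by (simp add: S_def s4 dist_real_def)
  moreover have "mfun S 1 4 = 4" by (simp add: mfun_def S_def s4 dist_real_def)
  ultimately have "Int0 \<phi> 4 \<le> k * Int0 \<phi> 4" using H by simp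
  with k pos show False
    by (smt (verit) mult_less_cancel_right2)
qed

theorem mainTheorem5:
  shows "S ` X \<subseteq> X \<and> T ` X \<subseteq> X
    \<and> \<not> (\<exists>k \<phi>. 0 \<le> k \<and> k < 1
          \<and> (\<forall>t\<ge>0. \<phi> t \<ge> 0)
          \<and> (\<forall>a\<ge>0. set_integrable lborel {0..a} \<phi>)
          \<and> (\<forall>\<epsilon>>0. Int0 \<phi> \<epsilon> > 0)
          \<and> (\<forall>x\<in>X. \<forall>y\<in>X. Int0 \<phi> (dist (S x) (S y)) \<le> k * Int0 \<phi> (mfun S x y)))
    \<and> (inj_on T X \<and> continuous_on X T \<and> seq_convergent_on X T
       \<and> (\<forall>x\<in>X. \<forall>y\<in>X. \<bar>T (S x) - T (S y)\<bar> = 1/2 * \<bar>T x - T y\<bar>)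
       \<and> (let \<phi> = (\<lambda>t::real. 1::real); k = (1/2::real) in
            \<forall>x\<in>X. \<forall>y\<in>X. Int0 \<phi> (dist (T (S x)) (T (S y)))
               \<le> k * Int0 \<phi> (Max {dist (T x) (T y), dist (T x) (T (S x)), dist (T y) (T (S y)),
                                    (dist (T x) (T (S y)) + dist (T y) (T (S x))) / 2})))"
proof -
  have A: "S ` X \<subseteq> X"
  proof
    fix z assume "z \<in> S ` X"
    then obtain x where x: "x \<ge> 1" "z = 4 * sqrt x" by (auto simp: X_def S_def)
    have "sqrt x \<ge> 1" using x by simp
    hence "z \<ge> 1" using x by linarith
    thus "z \<in> X" by (auto simp: X_def)
  qed
  have B: "T ` X \<subseteq> X"
    by (auto simp: X_def T_def ln_mult)
  have C: "inj_on T X"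
    by (auto simp: inj_on_def X_def T_def ln_mult)
  have D: "continuous_on X T"
    unfolding T_def X_def by (intro continuous_intros) auto
  have E: "seq_convergent_on X T"
    unfolding seq_convergent_on_def
  proof (intro allI impI)
    fix y :: "nat \<Rightarrow> real" assume y: "\<forall>n. y n \<in> X" and "\<exists>L\<in>X. (\<lambda>n. T (y n)) \<longlonglongrightarrow> L"
    then obtain L where L: "L \<in> X" "(\<lambda>n. T (y n)) \<longlonglongrightarrow> L" by blast
    have eq: "y n = exp (T (y n) - 1)" for n
      using y[rule_format, of n] by (simp add: X_def T_def ln_mult)
    have "(\<lambda>n. exp (T (y n) - 1)) \<longlonglongrightarrow> exp (L - 1)"
      by (intro tendsto_intros L(2))
    hence "y \<longlonglongrightarrow> exp (L - 1)" using eq by simp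
    moreover have "exp (L - 1) \<in> X" using L(1) by (simp add: X_def)
    ultimately show "\<exists>L\<in>X. y \<longlonglongrightarrow> L" by blast
  qed
  have F: "\<forall>x\<in>X. \<forall>y\<in>X. \<bar>T (S x) - T (S y)\<bar> = 1/2 * \<bar>T x - T y\<bar>"
  proof (intro ballI)
    fix x y assume "x \<in> X" "y \<in> X"
    from T_SS[OF this(1)] T_SS[OF this(2)] show "\<bar>T (S x) - T (S y)\<bar> = 1/2 * \<bar>T x - T y\<bar>"
      by (simp add: abs_if)
  qed
  have G: "\<forall>x\<in>X. \<forall>y\<in>X. Int0 (\<lambda>t. 1) (dist (T (S x)) (T (S y)))
               \<le> 1/2 * Int0 (\<lambda>t. 1) (Max {dist (T x) (T y), dist (T x) (T (S x)), dist (T y) (T (S y)),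
                                    (dist (T x) (T (S y)) + dist (T y) (T (S x))) / 2})"
  proof (intro ballI)
    fix x y assume x: "x \<in> X" and y: "y \<in> X"
    let ?M = "Max {dist (T x) (T y), dist (T x) (T (S x)), dist (T y) (T (S y)),
                                    (dist (T x) (T (S y)) + dist (T y) (T (S x))) / 2}"
    have m: "dist (T x) (T y) \<le> ?M" by (rule Max4_ge)
    have "dist (T (S x)) (T (S y)) = 1/2 * dist (T x) (T y)"
      using F x y by (simp add: dist_real_def)
    moreover have "0 \<le> dist (T x) (T y)" by simp
    ultimately show "Int0 (\<lambda>t. 1) (dist (T (S x)) (T (S y))) \<le> 1/2 * Int0 (\<lambda>t. 1) ?M"
    proof -
      have "0 \<le> ?M" using m \<open>0 \<le> dist (T x) (T y)\<close> by linarith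
      hence i1: "Int0 (\<lambda>t. 1) ?M = ?M" by (rule Int0_one)
      have i2: "Int0 (\<lambda>t. 1) (dist (T (S x)) (T (S y))) = dist (T (S x)) (T (S y))"
        by (rule Int0_one) simp
      show ?thesis unfolding i1 i2 using m \<open>dist (T (S x)) (T (S y)) = 1/2 * dist (T x) (T y)\<close> by linarith
    qed
  qed
  show ?thesis using A B C D E F G part1 by (simp add: Let_def)
qed

end
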